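(* Let $m\ge 2$, $\omega=e^{2\pi i/m}$, and let $$C_n(q)=\prod_{2\le t\le n}\frac{[t+n]_q}{[t]_q}=\frac{1}{[n+1]_q}{2n\brack n}_q$$ be the $q$-Catalan number (a polynomial in $q$). Then for every $1\le j\le m-1$, $$\lim_{n\to\infty}\frac{C_n(\omega^j)}{C_n(1)}=0 ,$$ where $C_n(1)=\frac1{n+1}\binom{2n}{n}$.
   Context: $[t]_q=1+q+\cdots+q^{t-1}$, $[n]_q!=[1]_q\cdots[n]_q$ with $[0]_q!=1$, and ${n\brack k}_q=\frac{[n]_q!}{[k]_q![n-k]_q!}$. Here $C_n(\omega^j)$ means the value at $q=\omega^j$ of the polynomial $C_n(q)$. *)

theory Defs
  imports "HOL-Analysis.Analysis" "HOL-Computational_Algebra.Polynomial"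
begin

definition qint :: "nat \<Rightarrow> complex poly" where
  "qint t = (\<Sum>i<t. monom 1 i)"

definition qfact :: "nat \<Rightarrow> complex poly" where
  "qfact n = (\<Prod>t=1..n. qint t)"

text \<open>Gaussian binomial coefficient (exact polynomial division).\<close>
definition qbinom :: "nat \<Rightarrow> nat \<Rightarrow> complex poly" where
  "qbinom n k = qfact n div (qfact k * qfact (n - k))"

definition qcatalan :: "nat \<Rightarrow> complex poly" where
  "qcatalan n = qbinom (2*n) n div qint (n+1)"

end

theory Submission
  imports Defs "HOL-Real_Asymp.Real_Asymp"
begin

fun G :: "nat \<Rightarrow> nat \<Rightarrow> complex poly" where
  "G n 0 = 1"
| "G 0 (Suc k) = 0"
| "G (Suc n) (Suc k) = G n k + monom 1 (Suc k) * G n (Suc k)"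

lemma qint_0[simp]: "qint 0 = 0" by (simp add: qint_def)
lemma qint_Suc: "qint (Suc t) = qint t + monom 1 t" by (simp add: qint_def)
lemma qint_1[simp]: "qint (Suc 0) = 1" by (simp add: qint_def one_pCons monom_0)

lemma qint_add: "qint (a + b) = qint a + monom 1 a * qint b"
proof (induction b)
  case 0 then show ?case by simp
next
  case (Suc b)
  have "qint (a + Suc b) = qint (a+b) + monom 1 (a+b)" by (simp add: qint_Suc)
  also have "\<dots> = qint a + monom 1 a * (qint b + monom 1 b)"
    using Suc by (simp add: mult_monom algebra_simps)
  finally show ?case by (simp add: qint_Suc)
qed

lemma poly_qint: "poly (qint t) x = (\<Sum>i<t. x ^ i)"
  by (simp add: qint_def poly_sum poly_monom)

lemma qint_nz: "t \<ge> 1 \<Longrightarrow> qint t \<noteq> 0"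
proof
  assume "t \<ge> 1" "qint t = 0"
  then have "poly (qint t) 1 = 0" by simp
  then show False using \<open>t \<ge> 1\<close> by (simp add: poly_qint)
qed

lemma qfact_0[simp]: "qfact 0 = 1" by (simp add: qfact_def)
lemma qfact_Suc: "qfact (Suc n) = qfact n * qint (Suc n)"
  by (simp add: qfact_def prod.nat_ivl_Suc' mult.commute)

lemma qfact_nz: "qfact n \<noteq> 0"
  by (induction n) (simp_all add: qfact_Suc qint_nz)

lemma G_gt: "k > n \<Longrightarrow> G n k = 0"
proof (induction n k rule: G.induct)
  case (3 n k) then show ?case by simp
qed auto

lemma G_diag[simp]: "G n n = 1"
  by (induction n) (simp_all add: G_gt)

lemma G_fact: "k \<le> n \<Longrightarrow> qfact k * qfact (n - k) * G n k = qfact n"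
proof (induction n arbitrary: k)
  case 0 then show ?case by simp
next
  case (Suc n k)
  show ?case
  proof (cases k)
    case 0 then show ?thesis by simp
  next
    case (Suc k')
    show ?thesis
    proof (cases "k' = n")
      case True then show ?thesis using Suc by simp
    next
      case False
      with Suc \<open>k \<le> Suc n\<close> have lt: "k' < n" by simp
      have IH1: "qfact k' * qfact (n - k') * G n k' = qfact n" using Suc.IH lt by simp
      have IH2: "qfact (Suc k') * qfact (n - Suc k') * G n (Suc k') = qfact n"
        using Suc.IH lt by simp
      have e1: "qfact (n - k') = qfact (n - Suc k') * qint (n - k')"
        using lt qfact_Suc[of "n - Suc k'"] by (simp add: Suc_diff_Suc)
      have e2: "qint (Suc n) = qint (Suc k') + monom 1 (Suc k') * qint (n - k')"
        using qint_add[of "Suc k'" "n - k'"] lt by simp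
      have "qfact (Suc k') * qfact (Suc n - Suc k') * G (Suc n) (Suc k')
          = qint (Suc k') * (qfact k' * qfact (n - k') * G n k')
            + monom 1 (Suc k') * qint (n - k') * (qfact (Suc k') * qfact (n - Suc k') * G n (Suc k'))"
        by (simp add: qfact_Suc e1 algebra_simps)
      also have "\<dots> = qint (Suc k') * qfact n + monom 1 (Suc k') * qint (n - k') * qfact n"
        by (simp only: IH1 IH2)
      also have "\<dots> = qfact n * qint (Suc n)"
        by (simp add: e2 algebra_simps)
      finally show ?thesis using Suc by (simp add: qfact_Suc)
    qed
  qed
qed

lemma qbinom_G: "k \<le> n \<Longrightarrow> qbinom n k = G n k"
proof -
  assume "k \<le> n"
  have "qbinom n k = (qfact k * qfact (n - k) * G n k) div (qfact k * qfact (n - k))"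
    using G_fact[OF \<open>k \<le> n\<close>] by (simp add: qbinom_def)
  also have "\<dots> = G n k" using qfact_nz
    by (metis mult_eq_0_iff nonzero_mult_div_cancel_left)
  finally show ?thesis .
qed

definition D :: "nat \<Rightarrow> complex poly" where
  "D n = G (2*n) n - monom 1 1 * G (2*n) (Suc n)"

lemma G_ratio: "qint (Suc n) * G (2*n) (Suc n) = qint n * G (2*n) n"
proof (cases n)
  case 0 then show ?thesis by simp
next
  case (Suc n')
  have a: "qfact (Suc n) * qfact (n - 1) * G (2*n) (Suc n) = qfact (2*n)"
    using G_fact[of "Suc n" "2*n"] Suc by (simp add: numeral_2_eq_2)
  have b: "qfact n * qfact n * G (2*n) n = qfact (2*n)"
    using G_fact[of n "2*n"] by (simp add: mult_2)
  have c: "qfact n = qfact (n - 1) * qint n" using Suc qfact_Suc[of n'] by simp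
  have "(qfact n * qfact (n-1)) * (qint (Suc n) * G (2*n) (Suc n))
      = (qfact n * qfact (n-1)) * (qint n * G (2*n) n)"
    using a b c by (simp add: qfact_Suc algebra_simps)
  then show ?thesis using qfact_nz by simp
qed

lemma D_eq: "qint (Suc n) * D n = G (2*n) n"
proof -
  have e: "qint (Suc n) = 1 + monom 1 1 * qint n"
    using qint_add[of 1 n] by simp
  have "qint (Suc n) * D n = qint (Suc n) * G (2*n) n - monom 1 1 * (qint (Suc n) * G (2*n) (Suc n))"
    by (simp add: D_def algebra_simps)
  also have "\<dots> = qint (Suc n) * G (2*n) n - monom 1 1 * (qint n * G (2*n) n)"
    by (simp only: G_ratio)
  also have "\<dots> = G (2*n) n" by (simp add: e algebra_simps)
  finally show ?thesis .
qed

lemma qcatalan_D: "qcatalan n = D n"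
proof -
  have "qcatalan n = (qint (Suc n) * D n) div qint (Suc n)"
    by (simp add: qcatalan_def qbinom_G D_eq mult_2)
  also have "\<dots> = D n" using qint_nz[of "Suc n"] by simp
  finally show ?thesis .
qed

lemma poly_G_1: "poly (G n k) 1 = of_nat (n choose k)"
  by (induction n k rule: G.induct) (simp_all add: poly_monom)

lemma poly_G_norm: "norm z = 1 \<Longrightarrow> norm (poly (G n k) z) \<le> real (n choose k)"
proof (induction n k rule: G.induct)
  case (3 n k)
  have "norm (poly (G (Suc n) (Suc k)) z) \<le> norm (poly (G n k) z) + norm (z ^ Suc k * poly (G n (Suc k)) z)"
    by (simp add: poly_monom norm_triangle_ineq)
  also have "\<dots> \<le> real (n choose k) + real (n choose Suc k)"
    using 3 by (intro add_mono) (simp_all add: norm_mult norm_power)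
  finally show ?case by simp
qed auto

context
  fixes z :: complex and d :: nat
  assumes zd: "z ^ d = 1" and zt: "\<And>t. 0 < t \<Longrightarrow> t < d \<Longrightarrow> z ^ t \<noteq> 1" and d2: "d \<ge> 2"
begin

lemma norm_z: "norm z = 1"
proof -
  have "norm z = 1 \<or> d = 0" by (rule power_eq_1_iff[OF zd])
  then show ?thesis using d2 by linarith
qed

lemma z_ne1: "z \<noteq> 1" using zt[of 1] d2 by auto

lemma poly_qint_nz: "0 < t \<Longrightarrow> t < d \<Longrightarrow> poly (qint t) z \<noteq> 0"
  using power_diff_1_eq[of z t] zt[of t] by (auto simp: poly_qint)

lemma poly_qint_d: "poly (qint d) z = 0"
  using power_diff_1_eq[of z d] zd z_ne1 by (auto simp: poly_qint)

lemma poly_qfact_nz: "n < d \<Longrightarrow> poly (qfact n) z \<noteq> 0"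
  by (induction n) (auto simp: qfact_Suc poly_qint_nz)

lemma G_d_zero: "0 < j \<Longrightarrow> j < d \<Longrightarrow> poly (G d j) z = 0"
proof -
  assume j: "0 < j" "j < d"
  have "poly (qfact j) z * poly (qfact (d - j)) z * poly (G d j) z = poly (qfact d) z"
    using arg_cong[OF G_fact[of j d], of "\<lambda>p. poly p z"] j by simp
  also have "\<dots> = 0" using d2 qfact_Suc[of "d - 1"] poly_qint_d by simp
  finally show ?thesis using poly_qfact_nz[of j] poly_qfact_nz[of "d-j"] j by simp
qed

lemma z_pow_mod: "z ^ n = z ^ (n mod d)"
proof -
  have "z ^ n = z ^ (d * (n div d) + n mod d)" by (simp only: mult_div_mod_eq)
  also have "\<dots> = (z ^ d) ^ (n div d) * z ^ (n mod d)" by (simp only: power_add power_mult)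
  also have "\<dots> = z ^ (n mod d)" by (simp add: zd)
  finally show ?thesis .
qed

lemma qlucas: "poly (G N k) z = of_nat (N div d choose k div d) * poly (G (N mod d) (k mod d)) z"
proof (induction N arbitrary: k)
  case 0
  show ?case
  proof (cases k)
    case (Suc k')
    show ?thesis
    proof (cases "k < d")
      case True then show ?thesis using Suc by simp
    next
      case False
      have "d \<le> k \<and> 0 < d" using False d2 by linarith
      then have "k div d > 0" by (rule div_greater_zero_iff[THEN iffD2])
      then show ?thesis using Suc by simp
    qed
  qed simp
next
  case (Suc N k)
  show ?case
  proof (cases k)
    case 0 then show ?thesis by simp
  next
    case (Suc k')
    define a where "a = N mod d"
    define b where "b = k' mod d"
    define Q where "Q = N div d"
    define K where "K = k' div d"
    have ad: "a < d" "b < d" using d2 by (simp_all add: a_def b_def)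
    have rec: "poly (G (Suc N) (Suc k')) z = poly (G N k') z + z ^ Suc k' * poly (G N (Suc k')) z"
      by (simp add: poly_monom)
    have zS: "z ^ Suc k' = z ^ (Suc k' mod d)" by (rule z_pow_mod)
    have I1: "poly (G N k') z = of_nat (Q choose K) * poly (G a b) z"
      using Suc.IH by (simp add: a_def b_def Q_def K_def)
    have I2: "poly (G N (Suc k')) z = of_nat (Q choose (Suc k' div d)) * poly (G a (Suc k' mod d)) z"
      using Suc.IH by (simp add: a_def Q_def)
    show ?thesis
    proof (cases "Suc a = d"; cases "Suc b = d")
      assume A: "Suc a = d" and B: "Suc b = d"
      have m: "Suc N mod d = 0" "Suc N div d = Suc Q" "Suc k' mod d = 0" "Suc k' div d = Suc K"
        using A B by (simp_all add: mod_Suc div_Suc a_def b_def Q_def K_def)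
      have "b = a" using A B by simp
      then show ?thesis using rec zS I1 I2 m Suc by simp
    next
      assume A: "Suc a = d" and B: "Suc b \<noteq> d"
      have m: "Suc N mod d = 0" "Suc N div d = Suc Q" "Suc k' mod d = Suc b" "Suc k' div d = K"
        using A B by (simp_all add: mod_Suc div_Suc a_def b_def Q_def K_def)
      have "poly (G a b) z + z ^ Suc b * poly (G a (Suc b)) z = poly (G d (Suc b)) z"
        using A by (simp add: poly_monom flip: A)
      also have "\<dots> = 0" using G_d_zero[of "Suc b"] B ad by simp
      finally have h0: "poly (G a b) z + z ^ Suc b * poly (G a (Suc b)) z = 0" .
      have zS': "z ^ Suc k' = z ^ Suc b" using zS m by simp
      have I2': "poly (G N (Suc k')) z = of_nat (Q choose K) * poly (G a (Suc b)) z" using I2 m by simp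
      have "poly (G (Suc N) (Suc k')) z = of_nat (Q choose K) * poly (G a b) z + z ^ Suc b * (of_nat (Q choose K) * poly (G a (Suc b)) z)"
        by (simp only: rec zS' I1 I2')
      also have "\<dots> = of_nat (Q choose K) * (poly (G a b) z + z ^ Suc b * poly (G a (Suc b)) z)"
        by (simp add: algebra_simps)
      finally have "poly (G (Suc N) (Suc k')) z = of_nat (Q choose K) * (poly (G a b) z + z ^ Suc b * poly (G a (Suc b)) z)" .
      then have "poly (G (Suc N) (Suc k')) z = 0" using h0 by simp
      then show ?thesis using Suc m by simp
    next
      assume A: "Suc a \<noteq> d" and B: "Suc b = d"
      have m: "Suc N mod d = Suc a" "Suc N div d = Q" "Suc k' mod d = 0" "Suc k' div d = Suc K"
        using A B by (simp_all add: mod_Suc div_Suc a_def b_def Q_def K_def)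
      have "b > a" using A B ad by simp
      then show ?thesis using rec zS I1 I2 m Suc by (simp add: G_gt)
    next
      assume A: "Suc a \<noteq> d" and B: "Suc b \<noteq> d"
      have m: "Suc N mod d = Suc a" "Suc N div d = Q" "Suc k' mod d = Suc b" "Suc k' div d = K"
        using A B by (simp_all add: mod_Suc div_Suc a_def b_def Q_def K_def)
      have zS': "z ^ Suc k' = z ^ Suc b" using zS m by simp
      have I2': "poly (G N (Suc k')) z = of_nat (Q choose K) * poly (G a (Suc b)) z" using I2 m by simp
      have "poly (G (Suc N) (Suc k')) z = of_nat (Q choose K) * poly (G a b) z + z ^ Suc b * (of_nat (Q choose K) * poly (G a (Suc b)) z)"
        by (simp only: rec zS' I1 I2')
      also have "\<dots> = of_nat (Q choose K) * poly (G (Suc a) (Suc b)) z"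
        by (simp add: poly_monom algebra_simps)
      finally show ?thesis using Suc m by simp
    qed
  qed
qed

lemma G_bound: "norm (poly (G (2*n) k) z) \<le> 2 ^ n * 2 ^ d"
proof -
  note nz = norm_z
  have "norm (poly (G (2*n) k) z) = real (2*n div d choose k div d) * norm (poly (G (2*n mod d) (k mod d)) z)"
    by (subst qlucas) (simp add: norm_mult)
  also have "\<dots> \<le> 2 ^ (2*n div d) * 2 ^ (2*n mod d)"
  proof (rule mult_mono)
    show "real (2*n div d choose k div d) \<le> 2 ^ (2*n div d)"
      using binomial_le_pow2 by (metis of_nat_le_iff of_nat_numeral of_nat_power)
    have "norm (poly (G (2*n mod d) (k mod d)) z) \<le> real (2*n mod d choose k mod d)"
      by (rule poly_G_norm[OF nz])
    also have "\<dots> \<le> 2 ^ (2*n mod d)"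
      using binomial_le_pow2 by (metis of_nat_le_iff of_nat_numeral of_nat_power)
    finally show "norm (poly (G (2*n mod d) (k mod d)) z) \<le> 2 ^ (2*n mod d)" .
  qed auto
  also have "\<dots> \<le> 2 ^ n * 2 ^ d"
  proof (rule mult_mono)
    have "2*n div d \<le> 2*n div 2" using div_le_mono2[of 2 d "2*n"] d2 by simp
    then show "(2::real) ^ (2*n div d) \<le> 2 ^ n" by (intro power_increasing) simp_all
    have "2*n mod d < d" using d2 by simp
    then show "(2::real) ^ (2*n mod d) \<le> 2 ^ d" by (intro power_increasing) simp_all
  qed auto
  finally show ?thesis .
qed

lemma cat_bound: "norm (poly (qcatalan n) z) \<le> 2 ^ n * 2 ^ d * 2"
proof -
  note nz = norm_z
  have "norm (poly (qcatalan n) z) \<le> norm (poly (G (2*n) n) z) + norm (z * poly (G (2*n) (Suc n)) z)"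
    by (simp add: qcatalan_D D_def poly_monom norm_triangle_ineq4)
  also have "\<dots> \<le> 2 ^ n * 2 ^ d + 2 ^ n * 2 ^ d"
    using G_bound[of n n] G_bound[of n "Suc n"] by (intro add_mono) (simp_all add: norm_mult nz)
  finally show ?thesis by (simp add: mult_ac)
qed

end

lemma cat_1: "poly (qcatalan n) 1 = of_nat ((2*n) choose n) / of_nat (Suc n)"
proof -
  have "poly (qint (Suc n)) 1 * poly (qcatalan n) 1 = of_nat ((2*n) choose n)"
    using arg_cong[OF D_eq[of n], of "\<lambda>p. poly p 1"] by (simp add: qcatalan_D poly_G_1)
  moreover have "poly (qint (Suc n)) (1::complex) = of_nat (Suc n)" by (simp add: poly_qint)
  ultimately have "of_nat (Suc n) * poly (qcatalan n) 1 = of_nat ((2*n) choose n)" by simp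
  moreover have "of_nat (Suc n) \<noteq> (0::complex)" by (simp only: of_nat_eq_0_iff Suc_neq_Zero not_False_eq_True)
  ultimately show ?thesis by (simp only: eq_divide_eq mult.commute) simp
qed

lemma lim_aux: "(\<lambda>n::nat. (2::real) ^ n * (real n + 1) * (2 * real n) / 4 ^ n) \<longlonglongrightarrow> 0"
  by real_asymp

theorem mainTheorem5:
  fixes m j :: nat
  assumes "m \<ge> 2" and "1 \<le> j" and "j \<le> m - 1"
  defines "\<omega> \<equiv> exp (2 * complex_of_real pi * \<i> / of_nat m)"
  shows "(\<lambda>n. poly (qcatalan n) (\<omega> ^ j) / poly (qcatalan n) 1) \<longlonglongrightarrow> 0"
proof -
  define z where "z = \<omega> ^ j"
  have zm: "z ^ m = 1"
  proof -
    have "\<omega> ^ m = exp (of_nat m * (2 * complex_of_real pi * \<i> / of_nat m))"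
      unfolding \<omega>_def by (rule exp_of_nat_mult[symmetric])
    also have "\<dots> = exp (2 * complex_of_real pi * \<i>)" using assms(1) by simp
    also have "\<dots> = 1" by simp
    finally show ?thesis by (simp add: z_def flip: power_mult) (simp add: power_mult mult.commute[of j m])
  qed
  have zne: "z \<noteq> 1"
  proof
    assume "z = 1"
    have "z = exp (of_nat j * (2 * complex_of_real pi * \<i> / of_nat m))"
      unfolding z_def \<omega>_def by (rule exp_of_nat_mult[symmetric])
    then obtain k :: int where k: "Im (of_nat j * (2 * complex_of_real pi * \<i> / of_nat m)) = of_int (2 * k) * pi"
      using \<open>z = 1\<close> exp_eq_1 by metis
    then have "2 * pi * real j / real m = 2 * real_of_int k * pi" by (simp add: mult_ac)
    then have "real j = real_of_int k * real m" using assms(1) by (simp add: field_simps)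
    then have "int j = k * int m" by (metis of_int_eq_iff of_int_mult of_int_of_nat_eq)
    moreover have "0 < int j" "int j < int m" using assms by auto
    ultimately show False
    proof (cases "k \<le> 0")
      case True
      then have "k * int m \<le> 0" by (simp add: mult_nonpos_nonneg)
      then show False using \<open>int j = k * int m\<close> \<open>0 < int j\<close> by linarith
    next
      case False
      then have "1 * int m \<le> k * int m" by (intro mult_right_mono) simp_all
      then show False using \<open>int j = k * int m\<close> \<open>int j < int m\<close> by linarith
    qed
  qed
  define d where "d = (LEAST t. 0 < t \<and> z ^ t = 1)"
  have ex: "0 < m \<and> z ^ m = 1" using zm assms(1) by simp
  have dP: "0 < d \<and> z ^ d = 1" using LeastI[of "\<lambda>t. 0 < t \<and> z ^ t = 1" m] ex unfolding d_def by blast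
  have zt: "\<And>t. 0 < t \<Longrightarrow> t < d \<Longrightarrow> z ^ t \<noteq> 1"
    using not_less_Least unfolding d_def by blast
  have d2: "d \<ge> 2"
  proof (rule ccontr)
    assume "\<not> d \<ge> 2"
    then have "d = 1" using dP by simp
    then show False using dP zne by simp
  qed
  have bound: "norm (poly (qcatalan n) z) \<le> 2 ^ n * 2 ^ d * 2" for n
    by (rule cat_bound[OF conjunct2[OF dP] zt d2])
  show ?thesis
    unfolding z_def[symmetric]
  proof (rule Lim_null_comparison)
    show "\<forall>\<^sub>F n in sequentially. norm (poly (qcatalan n) z / poly (qcatalan n) 1)
            \<le> 2 ^ d * 2 * ((2::real) ^ n * (real n + 1) * (2 * real n) / 4 ^ n)"
    proof (rule eventually_sequentiallyI[of 1])
      fix n :: nat assume "1 \<le> n"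
      define B where "B = real ((2*n) choose n)"
      have Bl: "4 ^ n / (2 * real n) \<le> B" unfolding B_def
        using central_binomial_lower_bound[of n] \<open>1 \<le> n\<close> by simp
      have Bpos: "B > 0" unfolding B_def by simp
      have n1: "norm (poly (qcatalan n) (1::complex)) = B / (real n + 1)"
      proof -
        have "norm (poly (qcatalan n) (1::complex)) = real ((2*n) choose n) / norm (complex_of_nat (Suc n))"
          by (simp only: cat_1 norm_divide norm_of_nat)
        also have "\<dots> = B / (real n + 1)" by (simp only: norm_of_nat B_def) simp
        finally show ?thesis .
      qed
      have "norm (poly (qcatalan n) z / poly (qcatalan n) 1) = norm (poly (qcatalan n) z) * (real n + 1) / B"
        using Bpos by (simp add: norm_divide n1)
      also have "\<dots> \<le> (2 ^ n * 2 ^ d * 2) * (real n + 1) / (4 ^ n / (2 * real n))"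
        using bound[of n] Bl Bpos \<open>1 \<le> n\<close>
        by (intro frac_le mult_right_mono) simp_all
      also have "\<dots> = 2 ^ d * 2 * ((2::real) ^ n * (real n + 1) * (2 * real n) / 4 ^ n)"
        by (simp add: field_simps)
      finally show "norm (poly (qcatalan n) z / poly (qcatalan n) 1)
            \<le> 2 ^ d * 2 * ((2::real) ^ n * (real n + 1) * (2 * real n) / 4 ^ n)" .
    qed
    show "(\<lambda>n. 2 ^ d * 2 * ((2::real) ^ n * (real n + 1) * (2 * real n) / 4 ^ n)) \<longlonglongrightarrow> 0"
      by (rule tendsto_mult_right_zero[OF lim_aux])
  qed
qed

end
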